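(* Let $(X,d,\mu)$ be unbounded with base point $a$, assume $X$ is uniformly perfect at $a$ for radii $\ge1$ with constant $\kappa$, and assume that $\mu$ is doubling on $X$ and that $\hat\mu_q$, for some $q>0$, is doubling on $(\widehat X,\hat d)$. Then there are $0<s<q$ and $C_s>0$ such that $$\frac{\mu(B(a,r))}{\mu(B(a,R))}\ge C_s\Bigl(\frac rR\Bigr)^s\quad\text{whenever }1\le r\le R<\infty.$$
   Context: $\mu$ is a positive complete Borel measure on $(X,d)$ with $0<\mu(B)<\infty$ for every (open) ball $B(x,r)=\{y:d(x,y)<r\}$. A measure $\nu$ on a metric space is doubling if there is $C$ with $0<\nu(B(x,2r))\le C\nu(B(x,r))<\infty$ for all balls. $X$ is uniformly perfect at $a$ for radii $\ge1$ with constant $\kappa>1$ if $B(a,\kappa r)\setminus B(a,r)\ne\emptyset$ for all $r\ge1$. Sphericalization: $|x|=d(x,a)$, $\widehat X=X\cup\{\infty\}$, $d_a(x,y)=\frac{d(x,y)}{(1+|x|)(1+|y|)}$ for $x,y\in X$, $d_a(x,\infty)=d_a(\infty,x)=\frac1{1+|x|}$, $d_a(\infty,\infty)=0$; $\hat d(x,y)=\inf\sum_{j=1}^k d_a(x_{j-1},x_j)$ over finite chains $x=x_0,\dots,x_k=y$ in $\widehat X$. The measure $\hat\mu_q$ on $\widehat X$ is $d\hat\mu_q(x)=\frac{d\mu(x)}{(1+|x|)^q}$ on $X$ with $\hat\mu_q(\{\infty\})=0$. *)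

theory Defs
  imports "HOL-Analysis.Analysis"
begin

text \<open>Points of the sphericalization: Some x for x in X, None for the point at infinity.\<close>

definition sph_da :: "'a::metric_space \<Rightarrow> 'a option \<Rightarrow> 'a option \<Rightarrow> real" where
  "sph_da a p q = (case (p, q) of
      (Some x, Some y) \<Rightarrow> dist x y / ((1 + dist x a) * (1 + dist y a))
    | (Some x, None) \<Rightarrow> 1 / (1 + dist x a)
    | (None, Some y) \<Rightarrow> 1 / (1 + dist y a)
    | (None, None) \<Rightarrow> 0)"

fun chain_len :: "('b \<Rightarrow> 'b \<Rightarrow> real) \<Rightarrow> 'b list \<Rightarrow> real" where
  "chain_len f (x # y # zs) = f x y + chain_len f (y # zs)"
| "chain_len f _ = 0"

definition sph_dhat :: "'a::metric_space \<Rightarrow> 'a option \<Rightarrow> 'a option \<Rightarrow> real" where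
  "sph_dhat a p q = Inf {chain_len (sph_da a) xs | xs. xs \<noteq> [] \<and> hd xs = p \<and> last xs = q}"

text \<open>The measure \<open>\<hat>\<mu>_q\<close> on the sphericalization, as a set function
  (no mass at infinity).\<close>
definition sph_measure :: "'a::metric_space \<Rightarrow> real \<Rightarrow> 'a measure \<Rightarrow> 'a option set \<Rightarrow> ennreal" where
  "sph_measure a q M E = (\<integral>\<^sup>+ x\<in>(Some -` E). ennreal (1 / (1 + dist x a) powr q) \<partial>M)"

definition doubling_wrt :: "('b \<Rightarrow> 'b \<Rightarrow> real) \<Rightarrow> ('b set \<Rightarrow> ennreal) \<Rightarrow> bool" where
  "doubling_wrt \<delta> \<nu> \<longleftrightarrow> (\<exists>C::real. \<forall>x r. r > 0 \<longrightarrow>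
      0 < \<nu> {y. \<delta> x y < 2 * r} \<and>
      \<nu> {y. \<delta> x y < 2 * r} \<le> ennreal C * \<nu> {y. \<delta> x y < r} \<and>
      \<nu> {y. \<delta> x y < r} < \<infinity>)"

end

theory Submission
  imports Defs
begin

definition phi :: "'a::metric_space \<Rightarrow> 'a option \<Rightarrow> real" where
  "phi a p = (case p of None \<Rightarrow> 0 | Some x \<Rightarrow> 1 / (1 + dist x a))"

lemma sph_da_nonneg: "sph_da a p q \<ge> 0"
  by (auto simp: sph_da_def split: option.splits)

lemma chain_len_nonneg: "(\<And>x y. f x y \<ge> 0) \<Longrightarrow> chain_len f xs \<ge> 0"
  by (induction f xs rule: chain_len.induct) (auto intro: add_nonneg_nonneg)

lemma chain_len_lip:
  shows "(\<forall>x y. \<bar>h x - h y\<bar> \<le> f x y) \<Longrightarrow> xs \<noteq> [] \<Longrightarrow> \<bar>h (hd xs) - h (last xs)\<bar> \<le> chain_len f xs"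
proof (induction f xs rule: chain_len.induct)
  case (1 f x y zs)
  have A: "\<bar>h x - h y\<bar> \<le> f x y" using 1(2) by blast
  have B: "\<bar>h y - h (last (y#zs))\<bar> \<le> chain_len f (y # zs)" using 1(1)[OF 1(2)] by simp
  have "\<bar>h x - h (last (y # zs))\<bar> \<le> \<bar>h x - h y\<bar> + \<bar>h y - h (last (y#zs))\<bar>" using abs_triangle_ineq[of "h x - h y" "h y - h (last (y#zs))"] by simp
  also have "\<dots> \<le> f x y + chain_len f (y # zs)" using A B by (rule add_mono)
  finally show ?case by simp
qed simp_all

lemma phi_lip_da: "\<bar>phi a p - phi a q\<bar> \<le> sph_da a p q"
proof (cases p; cases q)
  fix x y assume [simp]: "p = Some x" "q = Some y"
  define u where "u = dist x a"
  define v where "v = dist y a"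
  have u0: "u \<ge> 0" and v0: "v \<ge> 0" by (simp_all add: u_def v_def)
  have t: "\<bar>v - u\<bar> \<le> dist x y"
    using abs_dist_diff_le[of y a x] unfolding u_def v_def by (simp add: dist_commute)
  have e: "1 / (1 + u) - 1 / (1 + v) = (v - u) / ((1 + u) * (1 + v))"
    using u0 v0 by (simp add: field_simps)
  have "\<bar>phi a p - phi a q\<bar> = \<bar>1 / (1 + u) - 1 / (1 + v)\<bar>"
    unfolding phi_def u_def v_def by simp
  also have "\<dots> = \<bar>v - u\<bar> / ((1 + u) * (1 + v))"
    unfolding e by (rule abs_div_pos[symmetric], rule mult_pos_pos) (use u0 v0 in linarith)+
  also have "\<dots> \<le> dist x y / ((1 + u) * (1 + v))"
    using t u0 v0 by (intro divide_right_mono) auto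
  finally show ?thesis unfolding sph_da_def u_def v_def by simp
next
  fix x assume "p = Some x" "q = None"
  moreover have "1 + dist x a > 0" by (simp add: add_pos_nonneg)
  ultimately show ?thesis by (simp add: phi_def sph_da_def)
next
  fix x assume "p = None" "q = Some x"
  moreover have "1 + dist x a > 0" by (simp add: add_pos_nonneg)
  ultimately show ?thesis by (simp add: phi_def sph_da_def)
next
  assume "p = None" "q = None"
  then show ?thesis by (simp add: phi_def sph_da_def)
qed

lemma sph_dhat_le: "sph_dhat a p q \<le> sph_da a p q"
proof -
  have "sph_da a p q \<in> {chain_len (sph_da a) xs | xs. xs \<noteq> [] \<and> hd xs = p \<and> last xs = q}"
    by (rule CollectI, rule exI[of _ "[p,q]"]) simp
  moreover have "bdd_below {chain_len (sph_da a) xs | xs. xs \<noteq> [] \<and> hd xs = p \<and> last xs = q}"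
    by (rule bdd_belowI[of _ 0]) (auto intro: chain_len_nonneg sph_da_nonneg)
  ultimately show ?thesis unfolding sph_dhat_def by (rule cInf_lower)
qed

lemma sph_dhat_ge: "\<bar>phi a p - phi a q\<bar> \<le> sph_dhat a p q"
  unfolding sph_dhat_def
proof (rule cInf_greatest)
  show "{chain_len (sph_da a) xs | xs. xs \<noteq> [] \<and> hd xs = p \<and> last xs = q} \<noteq> {}"
    by (rule ex_in_conv[THEN iffD1], rule exI, rule CollectI, rule exI[of _ "[p,q]"]) simp
  fix z assume "z \<in> {chain_len (sph_da a) xs | xs. xs \<noteq> [] \<and> hd xs = p \<and> last xs = q}"
  then obtain xs where "xs \<noteq> []" "hd xs = p" "last xs = q" "z = chain_len (sph_da a) xs" by blast
  then show "\<bar>phi a p - phi a q\<bar> \<le> z" 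
  proof -
    have "\<forall>x y. \<bar>phi a x - phi a y\<bar> \<le> sph_da a x y" using phi_lip_da by blast
    from chain_len_lip[OF this \<open>xs \<noteq> []\<close>] show ?thesis
      unfolding \<open>hd xs = p\<close> \<open>last xs = q\<close> \<open>z = _\<close> .
  qed
qed


lemma ennreal_max0: "ennreal (max x 0) = ennreal x"
  by (cases "x \<ge> 0") (auto simp: max_def ennreal_neg)

locale th45 =
  fixes \<mu> :: "'a::metric_space measure" and a :: 'a and \<kappa> q :: real
  assumes borel_sets: "sets borel \<subseteq> sets \<mu>"
    and balls_pos: "\<And>x r. r > 0 \<Longrightarrow> 0 < emeasure \<mu> (ball x r) \<and> emeasure \<mu> (ball x r) < \<infinity>"
    and kappa: "\<kappa> > 1"
    and unif_perfect: "\<And>r. r \<ge> 1 \<Longrightarrow> ball a (\<kappa> * r) - ball a r \<noteq> {}"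
    and mu_doubling: "doubling_wrt dist (emeasure \<mu>)"
    and q_pos: "q > 0"
    and hat_doubling: "doubling_wrt (sph_dhat a) (sph_measure a q \<mu>)"
begin

definition w :: "'a \<Rightarrow> real" where "w y = 1 / (1 + dist y a) powr q"
definition g :: "real \<Rightarrow> ennreal" where
  "g t = (\<integral>\<^sup>+ y. ennreal (w y) * indicator {y. t < dist y a} y \<partial>\<mu>)"
definition ann :: "real \<Rightarrow> real \<Rightarrow> ennreal" where
  "ann t1 t2 = (\<integral>\<^sup>+ y. ennreal (w y) * indicator {y. t1 < dist y a \<and> dist y a \<le> t2} y \<partial>\<mu>)"
definition M :: "real \<Rightarrow> real" where "M t = measure \<mu> (ball a t)"
definition Bh :: "'a option \<Rightarrow> real \<Rightarrow> 'a option set" where "Bh p r = {z. sph_dhat a p z < r}"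

lemma space_mu: "space \<mu> = UNIV"
proof -
  have "UNIV \<in> sets \<mu>" using borel_sets by auto
  from sets.sets_into_space[OF this] show ?thesis by auto
qed

lemma borel_in: "A \<in> sets borel \<Longrightarrow> A \<in> sets \<mu>"
  using borel_sets by blast

lemma ball_in[measurable]: "ball x r \<in> sets \<mu>"
  by (rule borel_in) simp

lemma dist_borel[measurable]: "(\<lambda>y. dist y a) \<in> borel_measurable borel"
  by (rule borel_measurable_continuous_onI) (intro continuous_intros)

lemma w_borel: "(\<lambda>y. ennreal (w y)) \<in> borel_measurable borel"
  unfolding w_def by measurable

lemma w_meas[measurable]: "(\<lambda>y. ennreal (w y)) \<in> borel_measurable \<mu>"
  by (rule borel_measurable_subalgebra[OF borel_sets _ w_borel]) (simp add: space_mu)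

lemma gt_in[measurable]: "{y. t < dist y a} \<in> sets \<mu>"
  by (rule borel_in) measurable

lemma ann_in[measurable]: "{y. t1 < dist y a \<and> dist y a \<le> t2} \<in> sets \<mu>"
  by (rule borel_in) measurable

lemma w_pos: "w y > 0"
proof -
  have "1 + dist y a > 0" by (simp add: add_pos_nonneg)
  then show ?thesis unfolding w_def by simp
qed

lemma fin_ball: "r > 0 \<Longrightarrow> emeasure \<mu> (ball x r) = ennreal (measure \<mu> (ball x r))"
  using balls_pos[of r x] by (intro emeasure_eq_ennreal_measure) auto

lemma pos_ball: "r > 0 \<Longrightarrow> measure \<mu> (ball x r) > 0"
  using balls_pos[of r x] fin_ball[of r x] by (auto simp: ennreal_less_iff)

lemma mono_ball: "0 < r \<Longrightarrow> r \<le> r' \<Longrightarrow> measure \<mu> (ball x r) \<le> measure \<mu> (ball x r')"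
proof -
  assume "0 < r" "r \<le> r'"
  then have "ball x r \<subseteq> ball x r'" by auto
  moreover have "ball x r' \<in> fmeasurable \<mu>"
    using balls_pos[of r' x] \<open>0 < r\<close> \<open>r \<le> r'\<close> by (auto simp: fmeasurable_def)
  ultimately show ?thesis by (intro measure_mono_fmeasurable) auto
qed

definition D :: real where
  "D = (SOME D. D \<ge> 1 \<and> (\<forall>x r. r > 0 \<longrightarrow> measure \<mu> (ball x (2*r)) \<le> D * measure \<mu> (ball x r)))"

lemma D_ex: "\<exists>D. D \<ge> 1 \<and> (\<forall>x r. r > 0 \<longrightarrow> measure \<mu> (ball x (2*r)) \<le> D * measure \<mu> (ball x r))"
proof -
  obtain C where C: "\<And>x r. r > 0 \<Longrightarrow> emeasure \<mu> {y. dist x y < 2 * r} \<le> ennreal C * emeasure \<mu> {y. dist x y < r}"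
    using mu_doubling unfolding doubling_wrt_def by blast
  have "measure \<mu> (ball x (2*r)) \<le> max C 1 * measure \<mu> (ball x r)" if "r > 0" for x r
  proof -
    have "ennreal (measure \<mu> (ball x (2*r))) \<le> ennreal (max C 0) * ennreal (measure \<mu> (ball x r))"
      using C[OF that, of x] fin_ball[of r x] fin_ball[of "2*r" x] that
      by (simp add: ball_def ennreal_max0)
    also have "\<dots> = ennreal (max C 0 * measure \<mu> (ball x r))" by (simp add: ennreal_mult)
    finally have "measure \<mu> (ball x (2*r)) \<le> max C 0 * measure \<mu> (ball x r)"
      by (subst (asm) ennreal_le_iff) auto
    also have "\<dots> \<le> max C 1 * measure \<mu> (ball x r)"
      using pos_ball[OF that, of x] by (intro mult_right_mono) auto
    finally show ?thesis .
  qed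
  then show ?thesis by (intro exI[of _ "max C 1"]) auto
qed

lemma D: "D \<ge> 1" "r > 0 \<Longrightarrow> measure \<mu> (ball x (2*r)) \<le> D * measure \<mu> (ball x r)"
  using someI_ex[OF D_ex] unfolding D_def[symmetric] by auto

lemma D_pow: "r > 0 \<Longrightarrow> measure \<mu> (ball x (2^n*r)) \<le> D^n * measure \<mu> (ball x r)"
proof (induction n)
  case 0 then show ?case by simp
next
  case (Suc n)
  have "measure \<mu> (ball x (2^Suc n*r)) = measure \<mu> (ball x (2*(2^n*r)))" by (simp add: mult.assoc)
  also have "\<dots> \<le> D * measure \<mu> (ball x (2^n*r))" using Suc by (intro D(2)) simp
  also have "\<dots> \<le> D * (D^n * measure \<mu> (ball x r))" using Suc D(1) by (intro mult_left_mono) auto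
  finally show ?case by (simp add: mult.assoc)
qed

lemma dbl_lam: "lam \<ge> 1 \<Longrightarrow> \<exists>E>0. \<forall>x r. r > 0 \<longrightarrow> measure \<mu> (ball x (lam*r)) \<le> E * measure \<mu> (ball x r)"
proof -
  assume l: "lam \<ge> 1"
  obtain n where n: "lam < 2^n" using real_arch_pow[of 2 lam] by auto
  have "measure \<mu> (ball x (lam*r)) \<le> D^n * measure \<mu> (ball x r)" if "r > 0" for x r
  proof -
    have "measure \<mu> (ball x (lam*r)) \<le> measure \<mu> (ball x (2^n*r))"
      using l n that by (intro mono_ball) auto
    also have "\<dots> \<le> D^n * measure \<mu> (ball x r)" using that by (rule D_pow)
    finally show ?thesis .
  qed
  moreover have "D^n > 0" using D(1) by simp
  ultimately show ?thesis by blast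
qed

abbreviation nu where "nu \<equiv> sph_measure a q \<mu>"

lemma nu_eq: "nu E = (\<integral>\<^sup>+ y. ennreal (w y) * indicator (Some -` E) y \<partial>\<mu>)"
  by (simp add: sph_measure_def w_def)

lemma Ch_ex: "\<exists>C\<ge>0. \<forall>p r. r > 0 \<longrightarrow> nu (Bh p (2*r)) \<le> ennreal C * nu (Bh p r) \<and> nu (Bh p r) < \<infinity>"
proof -
  obtain C where C: "\<And>p r. r > 0 \<Longrightarrow> nu (Bh p (2*r)) \<le> ennreal C * nu (Bh p r) \<and> nu (Bh p r) < \<infinity>"
    using hat_doubling unfolding doubling_wrt_def Bh_def by blast
  show ?thesis
    by (rule exI[of _ "max C 0"]) (use C in \<open>auto simp: ennreal_max0\<close>)
qed

definition Ch :: real where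
  "Ch = (SOME C. C \<ge> 0 \<and> (\<forall>p r. r > 0 \<longrightarrow> nu (Bh p (2*r)) \<le> ennreal C * nu (Bh p r) \<and> nu (Bh p r) < \<infinity>))"

lemma Ch: "Ch \<ge> 0" "r > 0 \<Longrightarrow> nu (Bh p (2*r)) \<le> ennreal Ch * nu (Bh p r)" "r > 0 \<Longrightarrow> nu (Bh p r) < \<infinity>"
  using someI_ex[OF Ch_ex] unfolding Ch_def[symmetric] by auto

lemma contain1: "{y. dist x a \<le> dist y a} \<subseteq> Some -` Bh (Some x) (2 * phi a (Some x))"
proof
  fix y assume "y \<in> {y. dist x a \<le> dist y a}"
  then have uv: "dist x a \<le> dist y a" by simp
  define u where "u = dist x a"
  define v where "v = dist y a"
  have u0: "u \<ge> 0" and v0: "v \<ge> 0" by (simp_all add: u_def v_def)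
  have uv': "u \<le> v" using uv by (simp add: u_def v_def)
  have pp: "(1+u)*(1+v) > 0" using u0 v0 by (intro mult_pos_pos) linarith+
  have tri: "dist x y \<le> u + v" unfolding u_def v_def
    using dist_triangle[of x y a] by (simp add: dist_commute)
  have "sph_dhat a (Some x) (Some y) \<le> sph_da a (Some x) (Some y)" by (rule sph_dhat_le)
  also have "\<dots> = dist x y / ((1+u)*(1+v))" by (simp add: sph_da_def u_def v_def)
  also have "\<dots> \<le> (u+v) / ((1+u)*(1+v))" using tri pp by (intro divide_right_mono) auto
  also have "\<dots> < (2*(1+v)) / ((1+u)*(1+v))" using pp uv' by (intro divide_strict_right_mono) auto
  also have "\<dots> = 2 * (1/(1+u))"
  proof -
    have "1+v \<noteq> 0" using v0 by linarith
    then have "(2*(1+v))/((1+u)*(1+v)) = 2/(1+u)" by (rule nonzero_mult_divide_mult_cancel_right)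
    then show ?thesis by simp
  qed
  also have "\<dots> = 2 * phi a (Some x)" by (simp add: phi_def u_def)
  finally show "y \<in> Some -` Bh (Some x) (2 * phi a (Some x))" by (simp add: Bh_def)
qed

lemma step1: "g (dist x a) \<le> nu (Bh (Some x) (2 * phi a (Some x)))"
proof -
  have "g (dist x a) \<le> (\<integral>\<^sup>+ y. ennreal (w y) * indicator (Some -` Bh (Some x) (2 * phi a (Some x))) y \<partial>\<mu>)"
    unfolding g_def using contain1[of x] by (intro nn_set_integral_set_mono) auto
  then show ?thesis by (simp add: nu_eq)
qed

lemma phi_pos: "phi a (Some x) > 0"
proof -
  have "1 + dist x a > 0" by (simp add: add_pos_nonneg)
  then show ?thesis by (simp add: phi_def)
qed

lemma step2: "nu (Bh (Some x) (2 * phi a (Some x))) \<le> ennreal Ch ^ 3 * nu (Bh (Some x) (phi a (Some x) / 4))"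
proof -
  define r where "r = phi a (Some x)"
  have r0: "r > 0" using phi_pos unfolding r_def .
  have "nu (Bh (Some x) (2 * r)) \<le> ennreal Ch * nu (Bh (Some x) r)" using r0 by (rule Ch(2))
  also have "nu (Bh (Some x) r) \<le> ennreal Ch * nu (Bh (Some x) (r/2))"
    using Ch(2)[of "r/2" "Some x"] r0 by simp
  also have "nu (Bh (Some x) (r/2)) \<le> ennreal Ch * nu (Bh (Some x) (r/4))"
    using Ch(2)[of "r/4" "Some x"] r0 by simp
  finally have "nu (Bh (Some x) (2 * r)) \<le> ennreal Ch * (ennreal Ch * (ennreal Ch * nu (Bh (Some x) (r/4))))"
    by (simp add: mult_left_mono)
  then show ?thesis unfolding r_def by (simp add: power3_eq_cube mult.assoc)
qed

lemma step3: "nu (Bh (Some x) (phi a (Some x) / 4))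
   \<le> ennreal ((5 / (4 * (1 + dist x a))) powr q) * emeasure \<mu> (ball a (2 * (1 + dist x a)))"
proof -
  define u where "u = dist x a"
  have u0: "u \<ge> 0" by (simp add: u_def)
  define W where "W = (5 / (4 * (1 + u))) powr q"
  define S where "S = Some -` Bh (Some x) (phi a (Some x) / 4)"
  define Bl where "Bl = ball a (2 * (1 + u))"
  have pt: "ennreal (w y) * indicator S y \<le> ennreal W * indicator Bl y" for y
  proof (cases "y \<in> S")
    case False then show ?thesis by simp
  next
    case True
    define v where "v = dist y a"
    have v0: "v \<ge> 0" by (simp add: v_def)
    define A where "A = 1 / (1 + u)"
    define B where "B = 1 / (1 + v)"
    have "\<bar>phi a (Some x) - phi a (Some y)\<bar> < phi a (Some x) / 4"
      using sph_dhat_ge[of a "Some x" "Some y"] True by (simp add: S_def Bh_def)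
    then have AB: "\<bar>A - B\<bar> < A / 4" by (simp add: phi_def A_def B_def u_def v_def)
    have "v < 2 * (1 + u)"
    proof (rule ccontr)
      assume "\<not> v < 2 * (1 + u)"
      then have "2 * (1 + u) \<le> 1 + v" by linarith
      then have "1 / (1 + v) \<le> 1 / (2 * (1 + u))" using u0 by (intro divide_left_mono) auto
      moreover have e: "A / 2 = 1 / (2 * (1 + u))" unfolding A_def by simp
      ultimately have "B \<le> A / 2" unfolding B_def e by blast
      moreover have "A > 0" using u0 by (simp add: A_def)
      ultimately show False using AB by linarith
    qed
    then have inB: "y \<in> Bl" by (simp add: Bl_def v_def dist_commute)
    have "B < A + A / 4" using AB by linarith
    moreover have "A + A / 4 = 5 / (4 * (1 + u))"
    proof -
      have "A + A / 4 = (5/4) * A" by linarith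
      moreover have "(5/4) * (1/z) = 5 / (4*z)" for z :: real by simp
      ultimately show ?thesis unfolding A_def by metis
    qed
    ultimately have "B < 5 / (4 * (1 + u))" by simp
    moreover have "B \<ge> 0" using v0 by (simp add: B_def)
    ultimately have "B powr q \<le> (5 / (4 * (1 + u))) powr q"
      using q_pos by (intro powr_mono2) auto
    moreover have "B powr q = w y"
      unfolding B_def w_def v_def using v0 by (simp add: powr_divide)
    ultimately have "w y \<le> W" by (simp add: W_def)
    then show ?thesis using inB True by (simp add: ennreal_leI)
  qed
  have "nu (Bh (Some x) (phi a (Some x) / 4)) = (\<integral>\<^sup>+ y. ennreal (w y) * indicator S y \<partial>\<mu>)"
    by (simp add: nu_eq S_def)
  also have "\<dots> \<le> (\<integral>\<^sup>+ y. ennreal W * indicator Bl y \<partial>\<mu>)"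
    by (intro nn_integral_mono pt)
  also have "\<dots> = ennreal W * emeasure \<mu> Bl"
    by (rule nn_integral_cmult_indicator) (simp add: Bl_def)
  finally show ?thesis by (simp add: W_def Bl_def u_def)
qed

lemma g_anti: "t \<le> t' \<Longrightarrow> g t' \<le> g t"
  unfolding g_def by (intro nn_set_integral_set_mono) auto

lemma g_fin: "t \<ge> 0 \<Longrightarrow> g t < \<infinity>"
proof -
  assume "t \<ge> 0"
  then have "g t \<le> g (dist a a)" by (intro g_anti) simp
  also have "\<dots> \<le> nu (Bh (Some a) (2 * phi a (Some a)))" by (rule step1)
  also have "\<dots> < \<infinity>" using phi_pos[of a] by (intro Ch(3)) simp
  finally show ?thesis .
qed

definition G :: "real \<Rightarrow> real" where "G t = enn2real (g t)"

lemma gG: "t \<ge> 0 \<Longrightarrow> g t = ennreal (G t)"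
  unfolding G_def using g_fin[of t] by (simp add: ennreal_enn2real less_top[symmetric])

lemma G_nonneg: "G t \<ge> 0" by (simp add: G_def)

lemma G_anti: "0 \<le> t \<Longrightarrow> t \<le> t' \<Longrightarrow> G t' \<le> G t"
  unfolding G_def using g_fin[of t] by (intro enn2real_mono g_anti) auto

lemma M_pos: "t > 0 \<Longrightarrow> M t > 0" unfolding M_def by (rule pos_ball)

lemma U: "G (dist x a) \<le> Ch^3 * ((5 / (4 * (1 + dist x a))) powr q * M (2 * (1 + dist x a)))"
proof -
  define W where "W = (5 / (4 * (1 + dist x a))) powr q"
  have W0: "W \<ge> 0" by (simp add: W_def)
  have p: "2 * (1 + dist x a) > 0" by (simp add: add_pos_nonneg)
  have "ennreal (G (dist x a)) = g (dist x a)" by (simp add: gG)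
  also have "\<dots> \<le> nu (Bh (Some x) (2 * phi a (Some x)))" by (rule step1)
  also have "\<dots> \<le> ennreal Ch ^ 3 * nu (Bh (Some x) (phi a (Some x) / 4))" by (rule step2)
  also have "\<dots> \<le> ennreal Ch ^ 3 * (ennreal W * emeasure \<mu> (ball a (2 * (1 + dist x a))))"
    unfolding W_def by (intro mult_left_mono step3) simp
  also have "\<dots> = ennreal (Ch^3 * (W * M (2 * (1 + dist x a))))"
    using fin_ball[OF p, of a] W0 Ch(1) M_pos[OF p]
    by (simp add: M_def ennreal_mult ennreal_power)
  finally show ?thesis unfolding W_def using Ch(1) W0 M_pos[OF p]
    by (subst (asm) ennreal_le_iff) (auto simp: W_def)
qed

lemma g_split: "t1 \<le> t2 \<Longrightarrow> g t1 = ann t1 t2 + g t2"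
proof -
  assume t: "t1 \<le> t2"
  have "(\<lambda>y. ennreal (w y) * indicator {y. t1 < dist y a} y) =
        (\<lambda>y. ennreal (w y) * indicator {y. t1 < dist y a \<and> dist y a \<le> t2} y + ennreal (w y) * indicator {y. t2 < dist y a} y)"
    using t by (auto simp: fun_eq_iff split: split_indicator)
  then show ?thesis unfolding g_def ann_def
    by (simp add: nn_integral_add)
qed

definition Elam :: "real \<Rightarrow> real" where
  "Elam lam = (SOME E. E > 0 \<and> (\<forall>x r. r > 0 \<longrightarrow> measure \<mu> (ball x (lam*r)) \<le> E * measure \<mu> (ball x r)))"

lemma Elam: assumes "lam \<ge> 1" shows "Elam lam > 0" "r > 0 \<Longrightarrow> measure \<mu> (ball x (lam*r)) \<le> Elam lam * measure \<mu> (ball x r)"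
  using someI_ex[OF dbl_lam[OF assms]] unfolding Elam_def[symmetric] by auto

lemma L: assumes r: "r \<ge> 1"
  shows "ennreal (M r / (((\<kappa>+2)*r) powr q * Elam (2*(\<kappa>+1)))) \<le> ann (r/2) ((\<kappa>+1)*r)"
proof -
  obtain z where z: "z \<in> ball a (\<kappa> * r) - ball a r" using unif_perfect[OF r] by blast
  then have z1: "r \<le> dist z a" and z2: "dist z a < \<kappa> * r" by (auto simp: dist_commute)
  define c where "c = 1 / ((\<kappa>+2)*r) powr q"
  have c0: "c \<ge> 0" by (simp add: c_def)
  define E where "E = Elam (2*(\<kappa>+1))"
  have E0: "E > 0" unfolding E_def using kappa by (intro Elam) auto
  have pt: "ennreal c * indicator (ball z (r/2)) y \<le> ennreal (w y) * indicator {y. r/2 < dist y a \<and> dist y a \<le> (\<kappa>+1)*r} y" for y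
  proof (cases "y \<in> ball z (r/2)")
    case False then show ?thesis by simp
  next
    case True
    then have zy: "dist z y < r/2" by simp
    have t1: "dist z a \<le> dist z y + dist y a" by (rule dist_triangle)
    have t2: "dist y a \<le> dist y z + dist z a" by (rule dist_triangle)
    have lo: "r/2 < dist y a" using t1 zy z1 by linarith
    have hi: "dist y a \<le> (\<kappa>+1)*r" using t2 zy z2 r by (simp add: dist_commute algebra_simps)
    have "1 + dist y a \<le> (\<kappa>+2)*r" using hi r by (simp add: algebra_simps)
    moreover have "0 < 1 + dist y a" by (simp add: add_pos_nonneg)
    ultimately have "(1 + dist y a) powr q \<le> ((\<kappa>+2)*r) powr q" using q_pos by (intro powr_mono2) auto
    moreover have "0 < (1 + dist y a) powr q" using \<open>0 < 1 + dist y a\<close> by simp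
    moreover have "0 < ((\<kappa>+2)*r) powr q" using kappa r by simp
    ultimately have "c \<le> w y" unfolding c_def w_def by (intro divide_left_mono) auto
    then show ?thesis using True lo hi by (simp add: ennreal_leI)
  qed
  have sub: "ball a r \<subseteq> ball z ((2*(\<kappa>+1)) * (r/2))"
  proof
    fix y assume "y \<in> ball a r"
    then have "dist a y < r" by simp
    moreover have "dist z y \<le> dist z a + dist a y" by (rule dist_triangle)
    ultimately show "y \<in> ball z ((2*(\<kappa>+1)) * (r/2))" using z2 by (simp add: algebra_simps)
  qed
  have "emeasure \<mu> (ball z ((2*(\<kappa>+1)) * (r/2))) < \<infinity>"
    using r kappa by (intro conjunct2[OF balls_pos]) simp
  then have "M r \<le> measure \<mu> (ball z ((2*(\<kappa>+1)) * (r/2)))"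
    unfolding M_def using sub
    by (intro measure_mono_fmeasurable) (auto simp: fmeasurable_def)
  also have "\<dots> \<le> E * measure \<mu> (ball z (r/2))" unfolding E_def using kappa r by (intro Elam) auto
  finally have mz: "M r / E \<le> measure \<mu> (ball z (r/2))" using E0 by (simp add: field_simps)
  have "M r / (((\<kappa>+2)*r) powr q * E) = c * (M r / E)" by (simp add: c_def)
  also have "\<dots> \<le> c * measure \<mu> (ball z (r/2))" using mz c0 by (intro mult_left_mono)
  finally have "ennreal (M r / (((\<kappa>+2)*r) powr q * E)) \<le> ennreal c * emeasure \<mu> (ball z (r/2))"
    using fin_ball[of "r/2" z] r c0 by (simp add: ennreal_mult[symmetric] ennreal_leI)
  also have "\<dots> = (\<integral>\<^sup>+ y. ennreal c * indicator (ball z (r/2)) y \<partial>\<mu>)"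
    by (rule nn_integral_cmult_indicator[symmetric]) simp
  also have "\<dots> \<le> ann (r/2) ((\<kappa>+1)*r)" unfolding ann_def by (intro nn_integral_mono pt)
  finally show ?thesis unfolding E_def .
qed

definition cL :: real where "cL = 1 / ((\<kappa>+2) powr q * Elam (2*(\<kappa>+1)))"
definition A0 :: real where "A0 = Ch^3 * (5*\<kappa>/(4*(\<kappa>+1))) powr q * Elam (4*(\<kappa>+1)) + 1"

lemma cL_pos: "cL > 0"
  unfolding cL_def using kappa Elam(1)[of "2*(\<kappa>+1)"] by simp

lemma A0_pos: "A0 > 0"
  unfolding A0_def using kappa Elam(1)[of "4*(\<kappa>+1)"] Ch(1)
  by (intro add_nonneg_pos mult_nonneg_nonneg) auto

lemma Lg: assumes r: "r \<ge> 1" shows "cL * (M r / r powr q) + G ((\<kappa>+1)*r) \<le> G (r/2)"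
proof -
  have e: "cL * (M r / r powr q) = M r / (((\<kappa>+2)*r) powr q * Elam (2*(\<kappa>+1)))"
    using kappa r by (simp add: cL_def powr_mult)
  have "cL * (M r / r powr q) \<ge> 0" using cL_pos M_pos[of r] r by simp
  then have "ennreal (cL * (M r / r powr q) + G ((\<kappa>+1)*r)) = ennreal (cL * (M r / r powr q)) + g ((\<kappa>+1)*r)"
    using r kappa by (simp add: ennreal_plus G_nonneg gG)
  also have "\<dots> \<le> ann (r/2) ((\<kappa>+1)*r) + g ((\<kappa>+1)*r)"
    unfolding e by (intro add_right_mono L r)
  also have "\<dots> = g (r/2)" using r kappa by (intro g_split[symmetric]) (simp add: algebra_simps)
  also have "\<dots> = ennreal (G (r/2))" using r by (intro gG) simp
  finally show ?thesis using G_nonneg by (subst (asm) ennreal_le_iff) auto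
qed

lemma Gb: assumes r: "r \<ge> 1" shows "G ((\<kappa>+1)*r) \<le> A0 * (M r / r powr q)"
proof -
  define K where "K = \<kappa>+1"
  have K: "K > 2" using kappa by (simp add: K_def)
  have k1: "\<kappa> \<le> \<kappa>*r" using mult_left_mono[of 1 r \<kappa>] r kappa by simp
  have "\<kappa> \<le> K*r" using k1 r unfolding K_def by (simp add: distrib_right)
  then have Kk: "K*r/\<kappa> \<ge> 1" using kappa by (simp add: le_divide_eq)
  then have "K*r/\<kappa> \<ge> 1" .
  from unif_perfect[OF this] obtain x where "x \<in> ball a (\<kappa> * (K*r/\<kappa>)) - ball a (K*r/\<kappa>)" by blast
  then have x1: "K*r/\<kappa> \<le> dist x a" and x2: "dist x a < K*r" using kappa by (auto simp: dist_commute)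
  define u where "u = dist x a"
  have "K*1 \<le> K*r" using K r by (intro mult_left_mono) auto
  then have Kr: "K*r \<ge> 1" using K by linarith
  have u1: "u > 0" using x1 Kk unfolding u_def by linarith
  have "G (K*r) \<le> G u" unfolding u_def using x2 by (intro G_anti) auto
  also have "\<dots> \<le> Ch^3 * ((5 / (4 * (1 + u))) powr q * M (2 * (1 + u)))" unfolding u_def by (rule U)
  also have "\<dots> \<le> Ch^3 * (((5*\<kappa>/(4*K)) powr q / r powr q) * (Elam (4*K) * M r))"
  proof (intro mult_left_mono mult_mono)
    have "5 / (4 * (1 + u)) \<le> 5 / (4 * (K*r/\<kappa>))"
    proof -
      have "K*r/\<kappa> \<le> 1+u" using x1 unfolding u_def by linarith
      then have d1: "4*(K*r/\<kappa>) \<le> 4*(1+u)" by (rule mult_left_mono) simp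
      have d2: "0 < 4*(1+u) * (4*(K*r/\<kappa>))" using u1 Kk by (intro mult_pos_pos) linarith+
      show ?thesis using divide_left_mono[OF d1 _ d2, of 5] by simp
    qed
    also have "\<dots> = (5*\<kappa>/(4*K)) / r" using kappa by (simp add: field_simps)
    finally have "(5 / (4 * (1 + u))) powr q \<le> ((5*\<kappa>/(4*K)) / r) powr q"
      using q_pos u1 by (intro powr_mono2) auto
    also have "\<dots> = (5*\<kappa>/(4*K)) powr q / r powr q" by (rule powr_divide)
    finally show "(5 / (4 * (1 + u))) powr q \<le> (5*\<kappa>/(4*K)) powr q / r powr q" .
    have p1: "0 < 2 * (1 + u)" using u1 by simp
    have gen: "d < t \<Longrightarrow> 1 \<le> t \<Longrightarrow> 2*(1+d) \<le> 4*t" for d t :: real by (smt (verit))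
    have "2 * (1 + u) \<le> 4 * (K * r)" using gen[OF x2 Kr] unfolding u_def .
    then have p2: "2 * (1 + u) \<le> (4*K) * r" by (simp add: mult.assoc)
    have "M (2 * (1 + u)) \<le> M ((4*K) * r)" unfolding M_def using p1 p2 by (rule mono_ball)
    also have "\<dots> \<le> Elam (4*K) * M r" unfolding M_def using K r by (intro Elam) auto
    finally show "M (2 * (1 + u)) \<le> Elam (4*K) * M r" .
  qed (use Ch(1) M_pos[of "2*(1+u)"] u1 in auto)
  also have "\<dots> = (Ch^3 * (5*\<kappa>/(4*K)) powr q * Elam (4*K)) * (M r / r powr q)" by simp
  also have "\<dots> \<le> A0 * (M r / r powr q)" unfolding A0_def K_def using M_pos[of r] r
    by (intro mult_right_mono) auto
  finally show ?thesis unfolding K_def .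
qed

definition \<theta> :: real where "\<theta> = A0 / (A0 + cL)"

lemma theta: "0 < \<theta>" "\<theta> < 1"
  unfolding \<theta>_def using A0_pos cL_pos by (auto simp: field_simps)

lemma step: assumes t: "t \<ge> 1/2" shows "G ((2*(\<kappa>+1)) * t) \<le> \<theta> * G t"
proof -
  define r where "r = 2*t"
  have r: "r \<ge> 1" using t by (simp add: r_def)
  have e1: "(2*(\<kappa>+1)) * t = (\<kappa>+1)*r" by (simp add: r_def)
  have e2: "t = r/2" by (simp add: r_def)
  define P where "P = M r / r powr q"
  define X where "X = G ((\<kappa>+1)*r)"
  define Y where "Y = G (r/2)"
  have l: "cL * P + X \<le> Y" using Lg[OF r] unfolding P_def X_def Y_def .
  have b: "X \<le> A0 * P" using Gb[OF r] unfolding P_def X_def .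
  have h1: "cL * X \<le> cL * (A0 * P)" using b cL_pos by (intro mult_left_mono) auto
  have h2: "A0 * (cL * P) \<le> A0 * (Y - X)" using l A0_pos by (intro mult_left_mono) auto
  have eq: "cL * (A0 * P) = A0 * (cL * P)" by simp
  have h2': "A0 * (cL * P) \<le> A0 * Y - A0 * X" using h2 by (simp add: right_diff_distrib)
  have "cL * X \<le> A0 * Y - A0 * X" using order_trans[OF h1[unfolded eq] h2'] .
  then have "(A0 + cL) * X \<le> A0 * Y" by (simp add: distrib_right)
  then have "X \<le> A0 * Y / (A0 + cL)" using A0_pos cL_pos by (simp add: pos_le_divide_eq mult.commute)
  moreover have "G ((2*(\<kappa>+1)) * t) = X" unfolding X_def e1 ..
  moreover have "G t = Y" unfolding Y_def r_def by simp
  ultimately show ?thesis unfolding \<theta>_def by simp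
qed

lemma iter: assumes r: "r \<ge> 1"
  shows "G ((2*(\<kappa>+1))^k * ((\<kappa>+1)*r)) \<le> \<theta>^k * G ((\<kappa>+1)*r)"
proof (induction k)
  case 0 then show ?case by simp
next
  case (Suc k)
  define X where "X = (2*(\<kappa>+1))^k * ((\<kappa>+1)*r)"
  have "1 \<le> (2*(\<kappa>+1))^k" using kappa by (intro one_le_power) simp
  moreover have "1 \<le> (\<kappa>+1)*r" using kappa r by (metis add_le_cancel_left add_nonneg_nonneg le_add_same_cancel1 less_eq_real_def mult_le_cancel_right1 mult.commute order_trans zero_le_one)
  ultimately have "1 \<le> X" unfolding X_def by (metis mult_le_cancel_right1 mult.commute order_trans less_le_not_le zero_le_one less_eq_real_def mult_mono)
  then have "G ((2*(\<kappa>+1)) * X) \<le> \<theta> * G X" by (intro step) simp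
  also have "\<dots> \<le> \<theta> * (\<theta>^k * G ((\<kappa>+1)*r))" using Suc theta unfolding X_def by (intro mult_left_mono) auto
  finally show ?case unfolding X_def by (simp add: mult.assoc)
qed

lemma final: "\<exists>s C. 0 < s \<and> s < q \<and> C > 0 \<and>
           (\<forall>r R. 1 \<le> r \<and> r \<le> R \<longrightarrow>
              measure \<mu> (ball a r) / measure \<mu> (ball a R) \<ge> C * (r / R) powr s)"
proof -
  define L where "L = 2*(\<kappa>+1)"
  have L: "L > 4" using kappa by (simp add: L_def)
  have L1: "L > 1" "L \<ge> 1" "L \<noteq> 1" "L > 0" using L by auto
  have lt: "log L \<theta> < 0" using theta L1 by simp
  define \<epsilon> where "\<epsilon> = min (q/2) (- log L \<theta>)"
  have e0: "\<epsilon> > 0" using lt q_pos by (simp add: \<epsilon>_def)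
  have e1: "\<epsilon> \<le> q/2" by (simp add: \<epsilon>_def)
  have e2: "log L \<theta> \<le> - \<epsilon>" by (simp add: \<epsilon>_def)
  have thL: "\<theta> \<le> L powr (- \<epsilon>)"
  proof -
    have "\<theta> = L powr (log L \<theta>)" using theta L1 by simp
    also have "\<dots> \<le> L powr (- \<epsilon>)" using e2 L1 by (intro powr_mono) auto
    finally show ?thesis .
  qed
  define s where "s = q - \<epsilon>"
  have s0: "0 < s" "s < q" using e0 e1 q_pos by (auto simp: s_def)
  define EL where "EL = Elam L"
  have EL: "EL > 0" unfolding EL_def using L1 by (intro Elam) auto
  define C1 where "C1 = A0 / cL * L powr (2*\<epsilon>)"
  define C' where "C' = max EL C1"
  have C': "C' > 0" "EL \<le> C'" "C1 \<le> C'" using EL by (auto simp: C'_def)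
  have key: "M R \<le> C' * (R/r) powr s * M r" if r: "1 \<le> r" and rR: "r \<le> R" for r R
  proof -
    define \<rho> where "\<rho> = R / r"
    have rho1: "\<rho> \<ge> 1" using r rR by (simp add: \<rho>_def)
    have Req: "R = \<rho> * r" using r by (simp add: \<rho>_def)
    have rhos: "1 \<le> \<rho> powr s" using rho1 s0 by (intro ge_one_powr_ge_zero) auto
    have Mr: "M r > 0" using r by (intro M_pos) simp
    have MR: "M R > 0" using r rR by (intro M_pos) simp
    have "M R \<le> C' * \<rho> powr s * M r"
    proof (cases "\<rho> < L")
      case True
      have RL: "R \<le> L * r" using True r unfolding Req by (intro mult_right_mono) auto
      have "M R \<le> M (L * r)" unfolding M_def using RL r rR by (intro mono_ball) auto
      also have "\<dots> \<le> EL * M r" unfolding M_def EL_def using L1 r by (intro Elam) auto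
      also have "\<dots> \<le> C' * M r" using C' Mr by (intro mult_right_mono) auto
      also have "\<dots> \<le> C' * \<rho> powr s * M r" using C' Mr rhos by simp
      finally show ?thesis .
    next
      case False
      then have rL: "\<rho> \<ge> L" by simp
      define x where "x = \<rho> / L"
      have x1: "x \<ge> 1" using rL L1 by (simp add: x_def)
      have x0: "x > 0" using x1 by simp
      define k where "k = nat \<lfloor>log L x\<rfloor>"
      have lx: "0 \<le> log L x" using x1 L1 by simp
      have kk: "real k = real_of_int \<lfloor>log L x\<rfloor>" using lx by (simp add: k_def)
      have k1: "real k \<le> log L x" using kk by simp
      have k2: "log L x < real k + 1" using kk by simp
      have Lk: "L^k \<le> x"
      proof -
        have "L^k = L powr (real k)" using L1 by (simp add: powr_realpow)
        also have "\<dots> \<le> L powr (log L x)" using k1 L1 by (intro powr_mono) auto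
        also have "\<dots> = x" using L1 x0 by simp
        finally show ?thesis .
      qed
      have Lk1: "x \<le> L powr (real k + 1)"
      proof -
        have "x = L powr (log L x)" using L1 x0 by simp
        also have "\<dots> \<le> L powr (real k + 1)" using k2 L1 by (intro powr_mono) auto
        finally show ?thesis .
      qed
      have Kr1: "1 \<le> (\<kappa>+1)*r" using kappa r
        by (metis add_le_cancel_left add_nonneg_nonneg le_add_same_cancel1 less_eq_real_def mult_le_cancel_right1 mult.commute order_trans zero_le_one)
      have xe: "x * ((\<kappa>+1)*r) = R/2" using kappa r unfolding x_def L_def Req by (simp add: field_simps)
      have pos: "L^k * ((\<kappa>+1)*r) \<le> R/2"
        unfolding xe[symmetric] using Lk Kr1 by (intro mult_right_mono) auto
      have pos0: "0 \<le> L^k * ((\<kappa>+1)*r)" using L1 Kr1 by simp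
      define T where "T = \<theta>^k"
      have T0: "T \<ge> 0" using theta by (simp add: T_def)
      define a1 where "a1 = M R / R powr q"
      define b1 where "b1 = M r / r powr q"
      have "cL * a1 \<le> cL * a1 + G ((\<kappa>+1)*R)" using G_nonneg by simp
      also have "\<dots> \<le> G (R/2)" unfolding a1_def using r rR by (intro Lg) simp
      also have "\<dots> \<le> G (L^k * ((\<kappa>+1)*r))" using pos pos0 by (intro G_anti) auto
      also have "\<dots> \<le> T * G ((\<kappa>+1)*r)" unfolding T_def L_def using r by (rule iter)
      also have "\<dots> \<le> T * (A0 * b1)" unfolding b1_def using T0 Gb[OF r] by (intro mult_left_mono) auto
      finally have st: "cL * a1 \<le> T * (A0 * b1)" .
      then have a1b: "a1 \<le> A0 / cL * T * b1" using cL_pos by (simp add: field_simps)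
      have Tb: "T \<le> L powr (2*\<epsilon>) * \<rho> powr (- \<epsilon>)"
      proof -
        have "T \<le> (L powr (- \<epsilon>))^k" unfolding T_def using thL theta by (intro power_mono) auto
        also have "\<dots> = L powr (real k * (- \<epsilon>))" using L1 by (simp add: powr_power)
        also have "\<dots> = L powr \<epsilon> * (L powr (real k + 1)) powr (- \<epsilon>)"
          by (simp add: powr_powr powr_add[symmetric] algebra_simps)
        also have "\<dots> \<le> L powr \<epsilon> * x powr (- \<epsilon>)"
          using Lk1 x0 e0 by (intro mult_left_mono powr_mono2') auto
        also have "x powr (- \<epsilon>) = \<rho> powr (- \<epsilon>) * L powr \<epsilon>"
          unfolding x_def by (simp add: powr_divide powr_minus_divide)
        also have "L powr \<epsilon> * (\<rho> powr (- \<epsilon>) * L powr \<epsilon>) = L powr (2*\<epsilon>) * \<rho> powr (- \<epsilon>)"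
          by (simp add: powr_add[symmetric])
        finally show ?thesis .
      qed
      have MRe: "M R = a1 * R powr q" using r rR by (simp add: a1_def)
      have bR: "b1 * R powr q = \<rho> powr q * M r" using r by (simp add: b1_def Req powr_mult)
      have "M R \<le> (A0 / cL * T * b1) * R powr q" unfolding MRe using a1b by (intro mult_right_mono) auto
      also have "\<dots> = A0 / cL * T * \<rho> powr q * M r" using bR by (simp add: mult.assoc)
      also have "\<dots> \<le> A0 / cL * (L powr (2*\<epsilon>) * \<rho> powr (- \<epsilon>)) * \<rho> powr q * M r"
        using Tb A0_pos cL_pos Mr by (intro mult_right_mono mult_left_mono) auto
      also have "\<dots> = C1 * \<rho> powr s * M r"
        unfolding C1_def s_def by (simp add: powr_add[symmetric] powr_diff mult.assoc mult.left_commute)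
      also have "\<dots> \<le> C' * \<rho> powr s * M r" using C' Mr by (intro mult_right_mono) auto
      finally show ?thesis .
    qed
    then show ?thesis by (simp add: \<rho>_def)
  qed
  show ?thesis
  proof (intro exI conjI allI impI)
    show "0 < s" "s < q" by (rule s0)+
    show "0 < 1 / C'" using C' by simp
    fix r R :: real assume rR: "1 \<le> r \<and> r \<le> R"
    then have r: "1 \<le> r" and rR': "r \<le> R" by auto
    define \<rho> where "\<rho> = R / r"
    have rho0: "\<rho> > 0" using r rR' by (simp add: \<rho>_def)
    have Mr: "M r > 0" using r by (intro M_pos) simp
    have MR: "M R > 0" using r rR' by (intro M_pos) simp
    have k: "M R \<le> C' * \<rho> powr s * M r" using key[OF r rR'] by (simp add: \<rho>_def)
    have rp: "\<rho> powr s > 0" using rho0 by simp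
    have "(r / R) powr s = 1 / \<rho> powr s" unfolding \<rho>_def by (simp add: powr_divide)
    then have "1 / C' * (r / R) powr s = 1 / (C' * \<rho> powr s)" by simp
    also have "\<dots> = M r / (C' * \<rho> powr s * M r)" using Mr by simp
    also have "\<dots> \<le> M r / M R" using k MR Mr by (intro divide_left_mono) auto
    finally show "1 / C' * (r / R) powr s \<le> measure \<mu> (ball a r) / measure \<mu> (ball a R)"
      by (simp add: M_def)
  qed
qed

end

theorem theorem4p5:
  fixes \<mu> :: "'a::metric_space measure" and a :: 'a and \<kappa> q :: real
  assumes borel_sets: "sets borel \<subseteq> sets \<mu>"
    and complete: "complete_measure \<mu>"
    and balls_pos: "\<And>x r. r > 0 \<Longrightarrow> 0 < emeasure \<mu> (ball x r) \<and> emeasure \<mu> (ball x r) < \<infinity>"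
    and unbounded: "\<not> bounded (UNIV :: 'a set)"
    and kappa: "\<kappa> > 1"
    and unif_perfect: "\<And>r. r \<ge> 1 \<Longrightarrow> ball a (\<kappa> * r) - ball a r \<noteq> {}"
    and mu_doubling: "doubling_wrt dist (emeasure \<mu>)"
    and q_pos: "q > 0"
    and hat_doubling: "doubling_wrt (sph_dhat a) (sph_measure a q \<mu>)"
  shows "\<exists>s C. 0 < s \<and> s < q \<and> C > 0 \<and>
           (\<forall>r R. 1 \<le> r \<and> r \<le> R \<longrightarrow>
              measure \<mu> (ball a r) / measure \<mu> (ball a R) \<ge> C * (r / R) powr s)"
  proof -
  interpret th45 \<mu> a \<kappa> q
    using borel_sets balls_pos kappa unif_perfect mu_doubling q_pos hat_doubling by unfold_locales
  show ?thesis by (rule final)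
qed

end
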